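(* Let $n\geq 1$ and $k\geq 1$ be integers and $d_1,\dots,d_k$ positive integers with $\sum_{i=1}^k d_i=n+1$. For $0\leq j\leq n$, let $S_j(n;d_1,\dots,d_k)$ denote the coefficient of $t^{n-j}$ in $n!\,F_n(t;d_1,\dots,d_k)$. Then $$S_j(n;d_1,\dots,d_k)=\begin{cases}2S_j(n;d_1,\dots,d_{k-1}) & \text{if } k+j \text{ is even},\\ 0 & \text{if } k+j\text{ is odd}.\end{cases}$$
   Context: For an integer $m>0$, $\binom{t}{m}=\frac{1}{m!}\prod_{i=0}^{m-1}(t-i)$. For $I\subset\{1,\dots,k\}$, $d_I=\sum_{i\in I}d_i$ (with $d_\emptyset=0$). For integers $m>0$, $k\geq 0$ and positive integers $d_1,\dots,d_k$, define $F_m(t;d_1,\dots,d_k)=\sum_{I\subset\{1,\dots,k\}}(-1)^{|I|}\binom{t+m-d_I}{m}$; its degree in $t$ is at most $m$. $S_j(n;d_1,\dots,d_{k-1})$ is defined analogously as the coefficient of $t^{n-j}$ in $n!\,F_n(t;d_1,\dots,d_{k-1})$. *)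

theory Defs
  imports "HOL-Computational_Algebra.Polynomial"
begin

definition binom_poly :: "int \<Rightarrow> nat \<Rightarrow> real poly" where
  "binom_poly c m = smult (1 / fact m) (\<Prod>i<m. [: of_int c - of_nat i, 1 :])"

definition dsum :: "(nat \<Rightarrow> nat) \<Rightarrow> nat set \<Rightarrow> nat" where
  "dsum d I = (\<Sum>i\<in>I. d i)"

definition F_poly :: "nat \<Rightarrow> (nat \<Rightarrow> nat) \<Rightarrow> nat \<Rightarrow> real poly" where
  "F_poly m d k = (\<Sum>I\<in>Pow {1..k}.
      smult ((-1) ^ card I) (binom_poly (int m - int (dsum d I)) m))"

definition S_coeff :: "nat \<Rightarrow> nat \<Rightarrow> (nat \<Rightarrow> nat) \<Rightarrow> nat \<Rightarrow> real" where
  "S_coeff j n d k = coeff (smult (fact n) (F_poly n d k)) (n - j)"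

end

theory Submission
  imports Defs
begin

definition bf :: "nat \<Rightarrow> real \<Rightarrow> real" where
  "bf n y = (1 / fact n) * (\<Prod>i<n. y - real i)"

lemma poly_binom: "poly (binom_poly c n) x = bf n (x + of_int c)"
  unfolding binom_poly_def bf_def by (simp add: poly_prod algebra_simps)

lemma bf_reflect: "bf n y = (-1)^n * bf n (real n - 1 - y)"
proof -
  have "(\<Prod>i<n. (real n - 1 - y) - real i) = (\<Prod>i<n. - (y - real (n - Suc i)))"
  proof (rule prod.cong)
    fix i assume "i \<in> {..<n}"
    then have "real (n - Suc i) = real n - 1 - real i" by (simp add: of_nat_diff)
    then show "(real n - 1 - y) - real i = - (y - real (n - Suc i))" by simp
  qed simp
  also have "\<dots> = (-1)^n * (\<Prod>i<n. y - real (n - Suc i))"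
    unfolding prod_uminus by simp
  also have "(\<Prod>i<n. y - real (n - Suc i)) = (\<Prod>i<n. y - real i)"
    using prod.nat_diff_reindex[of "\<lambda>i. y - real i" n] by simp
  finally show ?thesis unfolding bf_def by (simp add: power_mult_distrib[symmetric])
qed

definition Gf :: "nat \<Rightarrow> (nat \<Rightarrow> nat) \<Rightarrow> nat \<Rightarrow> real \<Rightarrow> real" where
  "Gf n d k x = (\<Sum>I\<in>Pow {1..k}. (-1)^card I * bf n (x + real n - real (dsum d I)))"

lemma poly_F: "poly (F_poly n d k) x = Gf n d k x"
  unfolding F_poly_def Gf_def by (simp add: poly_sum poly_binom of_nat_diff add_diff_eq)

lemma Gf_split:
  assumes "k \<ge> 1"
  shows "Gf n d k x = Gf n d (k-1) x - Gf n d (k-1) (x - real (d k))"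
proof -
  let ?A = "{1..k-1}"
  have kA: "{1..k} = insert k ?A" "k \<notin> ?A" using assms by auto
  have fin: "finite ?A" by simp
  have f: "\<And>I. (-1::real)^card I * bf n (x + real n - real (dsum d I)) =
           (-1)^card I * bf n (x + real n - real (dsum d I))" by simp
  have "Gf n d k x = (\<Sum>I\<in>Pow ?A. (-1)^card I * bf n (x + real n - real (dsum d I)))
      + (\<Sum>I\<in>insert k ` Pow ?A. (-1)^card I * bf n (x + real n - real (dsum d I)))"
    unfolding Gf_def kA(1) Pow_insert
    by (rule sum.union_disjoint) (use kA(2) in auto)
  also have "(\<Sum>I\<in>insert k ` Pow ?A. (-1)^card I * bf n (x + real n - real (dsum d I)))
      = (\<Sum>I\<in>Pow ?A. (-1)^card (insert k I) * bf n (x + real n - real (dsum d (insert k I))))"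
  proof (rule sum.reindex[unfolded comp_def])
    show "inj_on (insert k) (Pow ?A)"
    proof (rule inj_onI)
      fix X Y assume "X \<in> Pow ?A" "Y \<in> Pow ?A" "insert k X = insert k Y"
      moreover have "k \<notin> X" "k \<notin> Y" using kA(2) \<open>X \<in> Pow ?A\<close> \<open>Y \<in> Pow ?A\<close> by auto
      ultimately show "X = Y" using insert_ident by metis
    qed
  qed
  also have "\<dots> = - (\<Sum>I\<in>Pow ?A. (-1)^card I * bf n ((x - real (d k)) + real n - real (dsum d I)))"
    unfolding sum_negf[symmetric]
  proof (rule sum.cong)
    fix I assume "I \<in> Pow ?A"
    then have "finite I" "k \<notin> I" using kA(2) finite_subset[OF _ fin] by auto
    then show "(-1)^card (insert k I) * bf n (x + real n - real (dsum d (insert k I))) =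
       - ((-1)^card I * bf n ((x - real (d k)) + real n - real (dsum d I)))"
      by (simp add: dsum_def algebra_simps)
  qed simp
  finally show ?thesis unfolding Gf_def by simp
qed

lemma Gf_sym:
  "Gf n d m x = (-1)^(m+n) * Gf n d m (real (dsum d {1..m}) - real n - 1 - x)"
proof -
  let ?A = "{1..m}"
  let ?D = "real (dsum d ?A)"
  let ?f = "\<lambda>x I. (-1::real)^card I * bf n (x + real n - real (dsum d I))"
  have "Gf n d m x = (\<Sum>I\<in>Pow ?A. ?f x (?A - I))"
    unfolding Gf_def
    by (rule sum.reindex_bij_witness[of _ "\<lambda>I. ?A - I" "\<lambda>I. ?A - I"]) (auto simp: double_diff)
  also have "\<dots> = (\<Sum>I\<in>Pow ?A. (-1)^(m+n) * ?f (?D - real n - 1 - x) I)"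
  proof (rule sum.cong)
    fix I assume I: "I \<in> Pow ?A"
    then have fi: "finite I" "I \<subseteq> ?A" using finite_subset by auto
    have c: "card (?A - I) = m - card I" using fi by (simp add: card_Diff_subset)
    have cI: "card I \<le> m" using card_mono[OF _ fi(2)] by simp
    have ds: "real (dsum d (?A - I)) = ?D - real (dsum d I)"
      unfolding dsum_def using sum.subset_diff[OF fi(2), of d] by simp
    have p: "(-1::real)^(m - card I) = (-1)^m * (-1)^card I"
    proof -
      have "(-1::real)^m = (-1)^(m - card I) * (-1)^card I"
        using cI by (simp add: power_add[symmetric])
      then have "(-1::real)^m * (-1)^card I = (-1)^(m - card I) * ((-1)^card I * (-1)^card I)"
        by simp
      also have "(-1::real)^card I * (-1)^card I = 1" by (simp add: power_add[symmetric] flip: power_mult_distrib)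
      finally show ?thesis by simp
    qed
    have b: "bf n (x + real n - (?D - real (dsum d I))) =
             (-1)^n * bf n ((?D - real n - 1 - x) + real n - real (dsum d I))"
      by (subst bf_reflect) (simp add: algebra_simps)
    show "?f x (?A - I) = (-1)^(m+n) * ?f (?D - real n - 1 - x) I"
      unfolding c ds p b by (simp add: power_add)
  qed simp
  finally show ?thesis unfolding Gf_def by (simp add: sum_distrib_left)
qed

definition Rf :: "real poly \<Rightarrow> real poly" where
  "Rf p = (\<Sum>i\<le>degree p. monom ((-1)^i * coeff p i) i)"

lemma coeff_Rf: "coeff (Rf p) m = (-1)^m * coeff p m"
  unfolding Rf_def coeff_sum coeff_monom
  by (cases "m \<le> degree p") (auto simp: coeff_eq_0)

lemma neg_pow: "(-x::real)^i = (-1)^i * x^i" by (metis mult_minus1 power_mult_distrib)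

lemma poly_Rf: "poly (Rf p) x = poly p (-x)"
proof -
  have "poly (Rf p) x = (\<Sum>i\<le>degree p. (-1)^i * coeff p i * x ^ i)"
    unfolding Rf_def poly_sum poly_monom ..
  also have "\<dots> = (\<Sum>i\<le>degree p. coeff p i * (-x) ^ i)"
    by (rule sum.cong) (simp_all only: neg_pow[of x] mult_ac)
  also have "\<dots> = poly p (-x)" by (rule poly_altdef[symmetric])
  finally show ?thesis .
qed

theorem lemma3p5:
  fixes n k j :: nat and d :: "nat \<Rightarrow> nat"
  assumes "n \<ge> 1" and "k \<ge> 1"
    and "\<forall>i\<in>{1..k}. d i > 0"
    and "(\<Sum>i=1..k. d i) = n + 1"
    and "j \<le> n"
  shows "S_coeff j n d k =
           (if even (k + j) then 2 * S_coeff j n d (k - 1) else 0)"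
proof -
  let ?G = "F_poly n d (k-1)"
  have kA: "{1..k} = insert k {1..k-1}" "k \<notin> {1..k-1}" using assms(2) by auto
  have Dn: "dsum d {1..k-1} + d k = n + 1"
    using assms(4) unfolding kA(1) dsum_def using kA(2) by simp
  have D: "real (dsum d {1..k-1}) + real (d k) = real n + 1"
    using arg_cong[OF Dn, of real] by simp
  have eq: "F_poly n d k = ?G + smult ((-1)^(k+n)) (Rf ?G)"
  proof (rule poly_eq_poly_eq_iff[THEN iffD1], rule ext)
    fix x
    have "Gf n d (k-1) (x - real (d k)) =
        (-1)^(k-1+n) * Gf n d (k-1) (real (dsum d {1..k-1}) - real n - 1 - (x - real (d k)))"
      by (rule Gf_sym)
    also have "real (dsum d {1..k-1}) - real n - 1 - (x - real (d k)) = -x" using D by simp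
    also have "(-1::real)^(k-1+n) = -((-1)^(k+n))"
    proof -
      have h: "k + n = Suc (k-1+n)" using assms(2) by simp
      show ?thesis unfolding h power_Suc by simp
    qed
    finally have "Gf n d (k-1) (x - real (d k)) = -((-1)^(k+n)) * Gf n d (k-1) (-x)" .
    then show "poly (F_poly n d k) x = poly (?G + smult ((-1)^(k+n)) (Rf ?G)) x"
      using Gf_split[OF assms(2), of n d x] by (simp add: poly_F poly_Rf)
  qed
  have e: "k + n + (n - j) = (k + j) + 2 * (n - j)" using assms(5) by simp
  have s1: "S_coeff j n d k = fact n * (coeff ?G (n-j) + (-1)^(k+n) * ((-1)^(n-j) * coeff ?G (n-j)))"
    unfolding S_coeff_def eq by (simp add: coeff_Rf)
  have s2: "(-1::real)^(k+n) * (-1)^(n-j) = (-1)^(k+j)"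
    by (simp only: power_add[symmetric] e) (simp add: power_add power_mult)
  have s3: "S_coeff j n d k = fact n * coeff ?G (n-j) * (1 + (-1)^(k+j))"
    unfolding s1 s2[symmetric] by (simp add: algebra_simps)
  have s4: "S_coeff j n d (k-1) = fact n * coeff ?G (n-j)"
    unfolding S_coeff_def by (simp only: coeff_smult)
  show ?thesis
  proof (cases "even (k+j)")
    case True
    then have "(-1::real)^(k+j) = 1" by simp
    then show ?thesis unfolding s3 s4 using True by simp
  next
    case False
    then have "(-1::real)^(k+j) = -1" by simp
    then show ?thesis unfolding s3 s4 using False by simp
  qed
qed

end
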